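(* Let $U,V\in\mathbb{R}^n$ be random vectors whose coordinate pairs $(U_i,V_i)$ are i.i.d. with finite fourth moments, independent of $\Pi$, and let $\Pi$ be a random sampling with replacement matrix with sampling probabilities $p_1,\ldots,p_n$. Then $$\mathbb{E}\left[n^{-1}(U^T\Pi^T\Pi V-U^TV)\right]=0,\qquad \mathrm{Var}\left[n^{-1}(U^T\Pi^T\Pi V-U^TV)\right]=\left\{\frac1m-\frac1n+\left(1-\frac1m\right)\sum_{i=1}^np_i^2\right\}\mathrm{Var}(U_iV_i).$$
   Context: Random sampling with replacement: for deterministic $p_1,\dots,p_n\ge0$ summing to 1, draw $k_1,\ldots,k_m$ independently from $\{1,\ldots,n\}$ with $\Pr(k_t=i)=p_i$ and set $\Pi=\sqrt{n/m}\,(\iota_{k_1},\ldots,\iota_{k_m})^T\in\mathbb{R}^{m\times n}$, where $\iota_k$ is the $k$-th column of the $n\times n$ identity matrix. *)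

theory Defs
  imports "HOL-Probability.Probability"
begin

text \<open>Indices are 0-based: rows t < m, columns i < n.
  Entry (t,i) of the sampling-with-replacement matrix
  Pi = sqrt(n/m) (iota_{k_0},...,iota_{k_{m-1}})^T.\<close>
definition sampling_matrix :: "nat \<Rightarrow> nat \<Rightarrow> (nat \<Rightarrow> nat) \<Rightarrow> nat \<Rightarrow> nat \<Rightarrow> real" where
  "sampling_matrix n m k t i = sqrt (real n / real m) * (if k t = i then 1 else 0)"

definition sketched_inner :: "nat \<Rightarrow> nat \<Rightarrow> (nat \<Rightarrow> nat \<Rightarrow> real) \<Rightarrow> (nat \<Rightarrow> real) \<Rightarrow> (nat \<Rightarrow> real) \<Rightarrow> real" where
  "sketched_inner n m P u v = (\<Sum>t<m. (\<Sum>i<n. P t i * u i) * (\<Sum>j<n. P t j * v j))"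

end

theory Submission imports Defs begin

lemma bound4: "\<bar>(a::real) * b * (c * d)\<bar> \<le> a^4 + b^4 + (c^4 + d^4)"
proof -
  have 1: "\<bar>x * y\<bar> \<le> x^2 + y^2" for x y :: real
  proof -
    have "0 \<le> (\<bar>x\<bar> - \<bar>y\<bar>)^2" by simp
    then have "2 * (\<bar>x\<bar> * \<bar>y\<bar>) \<le> x^2 + y^2" by (simp add: power2_eq_square algebra_simps)
    moreover have "0 \<le> \<bar>x\<bar> * \<bar>y\<bar>" by simp
    moreover have "\<bar>x*y\<bar> = \<bar>x\<bar>*\<bar>y\<bar>" by (rule abs_mult)
    ultimately show ?thesis by linarith
  qed
  have 2: "(x*y)^2 \<le> x^4 + y^4" for x y :: real
  proof -
    have "0 \<le> (x^2 - y^2)^2" by simp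
    then have "2 * (x*y)^2 \<le> x^4 + y^4" by (simp add: power2_eq_square power4_eq_xxxx algebra_simps)
    moreover have "0 \<le> (x*y)^2" by simp
    ultimately show ?thesis by linarith
  qed
  show ?thesis using 1[of "a*b" "c*d"] 2[of a b] 2[of c d] by linarith
qed

lemma (in prob_space) indep_var_from_set:
  assumes "random_variable S X" "random_variable T Y"
    "indep_set {X -` A \<inter> space M | A. A \<in> sets S} {Y -` A \<inter> space M | A. A \<in> sets T}"
  shows "indep_var S X T Y"
proof -
  have e: "(\<lambda>i. {case_bool X Y i -` A \<inter> space M | A. A \<in> sets (case_bool S T i)})
     = case_bool {X -` A \<inter> space M | A. A \<in> sets S} {Y -` A \<inter> space M | A. A \<in> sets T}"
    by (rule ext) (simp split: bool.split)
  show ?thesis unfolding indep_var_def indep_vars_def2 e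
    using assms unfolding indep_set_def by (auto split: bool.split)
qed

lemma (in prob_space) indep_set_mono2:
  "indep_set A B \<Longrightarrow> A' \<subseteq> A \<Longrightarrow> B' \<subseteq> B \<Longrightarrow> indep_set A' B'"
  unfolding indep_sets2_eq by blast

lemma (in prob_space) preimage_family_compose:
  assumes X: "X \<in> measurable M S" and f: "f \<in> measurable S N"
  shows "{(\<lambda>\<omega>. f (X \<omega>)) -` B \<inter> space M | B. B \<in> sets N} \<subseteq> {X -` A \<inter> space M | A. A \<in> sets S}"
proof
  fix C assume "C \<in> {(\<lambda>\<omega>. f (X \<omega>)) -` B \<inter> space M | B. B \<in> sets N}"
  then obtain B where B: "B \<in> sets N" and C: "C = (\<lambda>\<omega>. f (X \<omega>)) -` B \<inter> space M" by blast
  have "C = X -` (f -` B \<inter> space S) \<inter> space M"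
    using C measurable_space[OF X] by auto
  moreover have "f -` B \<inter> space S \<in> sets S" using f B by (rule measurable_sets)
  ultimately show "C \<in> {X -` A \<inter> space M | A. A \<in> sets S}" by blast
qed

lemma abs_le_one_plus_sq: "\<bar>w\<bar> \<le> 1 + w * (w::real)"
proof (cases "\<bar>w\<bar> \<le> 1")
  case True then show ?thesis using zero_le_square[of w] by linarith
next
  case False then have "\<bar>w\<bar> * 1 \<le> \<bar>w\<bar> * \<bar>w\<bar>" by (intro mult_left_mono) auto
  then show ?thesis using abs_mult_self_eq[of w] by linarith
qed

lemma sq_expand: "((x::real)/m - y/n)^2 = x*x/(m*m) - 2*(x*y)/(m*n) + y*y/(n*n)"
  by (simp add: power2_eq_square divide_inverse inverse_mult_distrib algebra_simps)

lemma final_alg: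
  fixes m n mu s2 S :: real
  assumes "0 < m" "0 < n"
  shows "(m * (mu + s2) + (m * m - m) * (mu + s2 * S)) / (m * m) - 2 * (m * (n * mu + s2)) / (m * n)
     + (n * n * mu + n * s2) / (n * n) = (1 / m - 1 / n + (1 - 1 / m) * S) * s2"
  using assms by (simp add: field_simps)

lemma (in prob_space) int_sum2:
  assumes "\<And>a b. a \<in> A \<Longrightarrow> b \<in> B \<Longrightarrow> integrable M (F a b)"
  shows "integrable M (\<lambda>\<omega>. \<Sum>a\<in>A. \<Sum>b\<in>B. F a b \<omega>) \<and>
    integral\<^sup>L M (\<lambda>\<omega>. \<Sum>a\<in>A. \<Sum>b\<in>B. F a b \<omega>) = (\<Sum>a\<in>A. \<Sum>b\<in>B. integral\<^sup>L M (F a b))"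
proof
  show "integrable M (\<lambda>\<omega>. \<Sum>a\<in>A. \<Sum>b\<in>B. F a b \<omega>)"
    using assms by (intro Bochner_Integration.integrable_sum) auto
  have "integral\<^sup>L M (\<lambda>\<omega>. \<Sum>a\<in>A. \<Sum>b\<in>B. F a b \<omega>) = (\<Sum>a\<in>A. integral\<^sup>L M (\<lambda>\<omega>. \<Sum>b\<in>B. F a b \<omega>))"
    using assms by (intro Bochner_Integration.integral_sum Bochner_Integration.integrable_sum) auto
  also have "\<dots> = (\<Sum>a\<in>A. \<Sum>b\<in>B. integral\<^sup>L M (F a b))"
    using assms by (intro sum.cong refl Bochner_Integration.integral_sum) auto
  finally show "integral\<^sup>L M (\<lambda>\<omega>. \<Sum>a\<in>A. \<Sum>b\<in>B. F a b \<omega>) = (\<Sum>a\<in>A. \<Sum>b\<in>B. integral\<^sup>L M (F a b))" .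
qed

lemma sum_ind: "(\<Sum>i<(n::nat). (if k = i then 1 else 0) * (x i::real)) = (if k < n then x k else 0)"
proof -
  have "(\<Sum>i<n. (if k = i then 1 else 0) * (x i::real)) = (\<Sum>i<n. if i = k then x i else 0)"
    by (rule sum.cong) auto
  then show ?thesis using sum.delta[of "{..<n}" k x] by simp
qed

lemma sum_if_eq: "(\<Sum>s<m. \<Sum>t<m. (if s = t then a else b)) = real m * a + (real m * real m - real m) * (b::real)"
proof -
  have "(\<Sum>t<m. (if s = t then a else b)) = b * m + (a - b)" if "s < m" for s
  proof -
    have "(\<Sum>t<m. (if s = t then a else b)) = (\<Sum>t<m. b + (if s = t then a - b else 0))"
      by (rule sum.cong) auto
    also have "\<dots> = b * m + (a - b)" using that by (simp add: sum.distrib)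
    finally show ?thesis .
  qed
  then have "(\<Sum>s<m. \<Sum>t<m. (if s = t then a else b)) = (\<Sum>s<m. b * m + (a - b))" by simp
  then show ?thesis by (simp add: algebra_simps)
qed

lemma sumA:
  fixes p :: "nat \<Rightarrow> real"
  assumes "(\<Sum>i<n. p i) = 1"
  shows "(\<Sum>s<m. \<Sum>i<n. \<Sum>t<m. \<Sum>j<n. (mu + (if i = j then s2 else 0)) *
      (if s = t then (if i = j then p i else 0) else p i * p j))
    = real m * (mu + s2) + (real m * real m - real m) * (mu + s2 * (\<Sum>i<n. p i ^ 2))"
proof -
  have inner: "(\<Sum>i<n. \<Sum>j<n. (mu + (if i = j then s2 else 0)) *
      (if s = t then (if i = j then p i else 0) else p i * p j))
     = (if s = t then mu + s2 else mu + s2 * (\<Sum>i<n. p i ^ 2))" for s t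
  proof (cases "s = t")
    case True
    have e: "(mu + (if i = j then s2 else 0)) *
      (if s = t then (if i = j then p i else 0) else p i * p j) = (if i = j then (mu + s2) * p i else 0)" for i j
      using True by auto
    have "(\<Sum>i<n. \<Sum>j<n. (mu + (if i = j then s2 else 0)) *
      (if s = t then (if i = j then p i else 0) else p i * p j)) = (\<Sum>i<n. (mu + s2) * p i)"
      unfolding e by (simp add: sum.delta)
    also have "\<dots> = mu + s2" using assms by (simp add: sum_distrib_left[symmetric])
    finally show ?thesis using True by simp
  next
    case False
    have e: "(mu + (if i = j then s2 else 0)) *
      (if s = t then (if i = j then p i else 0) else p i * p j) = mu * p i * p j + (if i = j then s2 * p i ^ 2 else 0)" for i j
      using False by (auto simp: algebra_simps power2_eq_square)
    have "(\<Sum>i<n. \<Sum>j<n. (mu + (if i = j then s2 else 0)) *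
      (if s = t then (if i = j then p i else 0) else p i * p j))
      = (\<Sum>i<n. mu * p i * (\<Sum>j<n. p j) + s2 * p i ^ 2)"
      unfolding e by (simp add: sum.distrib sum.delta sum_distrib_left)
    also have "\<dots> = mu + s2 * (\<Sum>i<n. p i ^ 2)"
      using assms by (simp add: sum.distrib sum_distrib_left[symmetric])
    finally show ?thesis using False by simp
  qed
  have "(\<Sum>s<m. \<Sum>i<n. \<Sum>t<m. \<Sum>j<n. (mu + (if i = j then s2 else 0)) *
      (if s = t then (if i = j then p i else 0) else p i * p j))
     = (\<Sum>s<m. \<Sum>t<m. \<Sum>i<n. \<Sum>j<n. (mu + (if i = j then s2 else 0)) *
      (if s = t then (if i = j then p i else 0) else p i * p j))"
    by (rule sum.cong[OF refl]) (rule sum.swap)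
  also have "\<dots> = (\<Sum>s<m. \<Sum>t<m. (if s = t then mu + s2 else mu + s2 * (\<Sum>i<n. p i ^ 2)))"
    by (simp only: inner)
  also have "\<dots> = real m * (mu + s2) + (real m * real m - real m) * (mu + s2 * (\<Sum>i<n. p i ^ 2))"
    by (rule sum_if_eq)
  finally show ?thesis .
qed

lemma sumB:
  fixes p :: "nat \<Rightarrow> real"
  assumes "(\<Sum>i<n. p i) = 1"
  shows "(\<Sum>t<m. \<Sum>i<n. \<Sum>j<n. (mu + (if i = j then s2 else 0)) * p i) = real m * (real n * mu + s2)"
proof -
  have e: "(mu + (if i = j then s2 else 0)) * p i = mu * p i + (if i = j then s2 * p i else 0)" for i j
    by (auto simp: algebra_simps)
  have "(\<Sum>i<n. \<Sum>j<n. (mu + (if i = j then s2 else 0)) * p i) = (\<Sum>i<n. (real n * mu + s2) * p i)"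
    unfolding e by (simp add: sum.distrib sum.delta algebra_simps)
  also have "\<dots> = real n * mu + s2" using assms by (simp add: sum_distrib_left[symmetric])
  finally show ?thesis by simp
qed

lemma sumC:
  "(\<Sum>i<n. \<Sum>j<n. (mu + (if i = j then s2 else 0))) = real n * real n * mu + real n * (s2::real)"
  by (simp add: sum.distrib algebra_simps)

theorem lemmaA2:
  fixes M :: "'a measure" and n m :: nat and p :: "nat \<Rightarrow> real"
    and U V :: "nat \<Rightarrow> 'a \<Rightarrow> real" and k :: "nat \<Rightarrow> 'a \<Rightarrow> nat"
  defines "T \<equiv> (\<lambda>\<omega>. (sketched_inner n m (sampling_matrix n m (\<lambda>t. k t \<omega>)) (\<lambda>i. U i \<omega>) (\<lambda>i. V i \<omega>)
                       - (\<Sum>i<n. U i \<omega> * V i \<omega>)) / real n)"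
  assumes M: "prob_space M"
    and n: "n \<ge> 1" and m: "m \<ge> 1"
    and p_nonneg: "\<And>i. i < n \<Longrightarrow> p i \<ge> 0"
    and p_sum: "(\<Sum>i<n. p i) = 1"
    and k_rv: "\<And>t. t < m \<Longrightarrow> k t \<in> measurable M (count_space UNIV)"
    and k_dist: "\<And>t i. t < m \<Longrightarrow> i < n \<Longrightarrow> measure M {\<omega> \<in> space M. k t \<omega> = i} = p i"
    and k_indep: "prob_space.indep_vars M (\<lambda>_. count_space UNIV) k {..<m}"
    and U_rv: "\<And>i. i < n \<Longrightarrow> U i \<in> borel_measurable M"
    and V_rv: "\<And>i. i < n \<Longrightarrow> V i \<in> borel_measurable M"
    and UV_indep: "prob_space.indep_vars M (\<lambda>_. borel \<Otimes>\<^sub>M borel) (\<lambda>i \<omega>. (U i \<omega>, V i \<omega>)) {..<n}"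
    and UV_ident: "\<And>i. i < n \<Longrightarrow>
        distr M (borel \<Otimes>\<^sub>M borel) (\<lambda>\<omega>. (U i \<omega>, V i \<omega>)) = distr M (borel \<Otimes>\<^sub>M borel) (\<lambda>\<omega>. (U 0 \<omega>, V 0 \<omega>))"
    and U_4: "\<And>i. i < n \<Longrightarrow> integrable M (\<lambda>\<omega>. U i \<omega> ^ 4)"
    and V_4: "\<And>i. i < n \<Longrightarrow> integrable M (\<lambda>\<omega>. V i \<omega> ^ 4)"
    and indep_Pi: "prob_space.indep_set M
        {(\<lambda>\<omega>. \<lambda>i\<in>{..<n}. (U i \<omega>, V i \<omega>)) -` A \<inter> space M | A.
           A \<in> sets (\<Pi>\<^sub>M i\<in>{..<n}. borel \<Otimes>\<^sub>M borel)}
        {(\<lambda>\<omega>. \<lambda>t\<in>{..<m}. k t \<omega>) -` B \<inter> space M | B.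
           B \<in> sets (\<Pi>\<^sub>M t\<in>{..<m}. count_space UNIV)}"
  shows "integrable M T \<and> integrable M (\<lambda>\<omega>. T \<omega> ^ 2)
    \<and> (\<integral>\<omega>. T \<omega> \<partial>M) = 0
    \<and> (\<integral>\<omega>. (T \<omega> - (\<integral>\<omega>'. T \<omega>' \<partial>M)) ^ 2 \<partial>M)
        = (1 / real m - 1 / real n + (1 - 1 / real m) * (\<Sum>i<n. p i ^ 2))
          * (\<integral>\<omega>. (U 0 \<omega> * V 0 \<omega> - (\<integral>\<omega>'. U 0 \<omega>' * V 0 \<omega>' \<partial>M)) ^ 2 \<partial>M)"
proof -
  interpret prob_space M by (rule M)
  define W where "W = (\<lambda>i \<omega>. U i \<omega> * V i \<omega>)"
  define I where "I = (\<lambda>t i \<omega>. if k t \<omega> = i then 1 else (0::real))"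
  define Xv where "Xv = (\<lambda>\<omega>. \<lambda>i\<in>{..<n}. (U i \<omega>, V i \<omega>))"
  define Kv where "Kv = (\<lambda>\<omega>. \<lambda>t\<in>{..<m}. k t \<omega>)"
  define XS where "XS = (\<Pi>\<^sub>M i\<in>{..<n}. (borel \<Otimes>\<^sub>M borel :: (real \<times> real) measure))"
  define KS where "KS = (\<Pi>\<^sub>M t\<in>{..<m}. (count_space UNIV :: nat measure))"
  have Xv_rv: "random_variable XS Xv" unfolding XS_def Xv_def
    by (intro measurable_restrict measurable_Pair U_rv V_rv) auto
  have Kv_rv: "random_variable KS Kv" unfolding KS_def Kv_def
    by (intro measurable_restrict k_rv) auto
  have XK: "indep_set {Xv -` A \<inter> space M | A. A \<in> sets XS} {Kv -` A \<inter> space M | A. A \<in> sets KS}"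
    using indep_Pi by (simp add: Xv_def Kv_def XS_def KS_def)
  have G: "integrable M (\<lambda>\<omega>. f (Xv \<omega>) * g (Kv \<omega>)) \<and>
      (\<integral>\<omega>. f (Xv \<omega>) * g (Kv \<omega>) \<partial>M) = (\<integral>\<omega>. f (Xv \<omega>) \<partial>M) * (\<integral>\<omega>. g (Kv \<omega>) \<partial>M)"
    if f: "f \<in> borel_measurable XS" and g: "g \<in> borel_measurable KS"
      and fi: "integrable M (\<lambda>\<omega>. f (Xv \<omega>))" and gi: "integrable M (\<lambda>\<omega>. g (Kv \<omega>))"
    for f g :: "_ \<Rightarrow> real"
  proof -
    have "indep_var borel (\<lambda>\<omega>. f (Xv \<omega>)) borel (\<lambda>\<omega>. g (Kv \<omega>))"
      by (rule indep_var_from_set[OF measurable_compose[OF Xv_rv f] measurable_compose[OF Kv_rv g]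
          indep_set_mono2[OF XK preimage_family_compose[OF Xv_rv f] preimage_family_compose[OF Kv_rv g]]])
    then show ?thesis
      using indep_var_lebesgue_integral[of "\<lambda>\<omega>. f (Xv \<omega>)" "\<lambda>\<omega>. g (Kv \<omega>)"] indep_var_integrable[of "\<lambda>\<omega>. f (Xv \<omega>)" "\<lambda>\<omega>. g (Kv \<omega>)"] fi gi
      by simp
  qed
  have W_meas: "W a \<in> borel_measurable M" if "a < n" for a
    unfolding W_def using U_rv[OF that] V_rv[OF that] by measurable
  have I_meas: "I t i \<in> borel_measurable M" if "t < m" for t i
  proof -
    have "(\<lambda>x. if x = i then 1 else 0::real) \<in> borel_measurable (count_space UNIV)" by simp
    from measurable_compose[OF k_rv[OF that] this] show ?thesis by (simp add: I_def)
  qed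
  have I_bound: "\<bar>I t i \<omega>\<bar> \<le> 1" for t i \<omega> by (simp add: I_def)
  have I_int: "integrable M (I t i)" if "t < m" for t i
    by (rule integrable_const_bound[where B=1]) (auto simp: I_bound I_meas that)
  have WW_int: "integrable M (\<lambda>\<omega>. W a \<omega> * W b \<omega>)" if "a < n" "b < n" for a b
  proof (rule Bochner_Integration.integrable_bound)
    show "integrable M (\<lambda>\<omega>. U a \<omega> ^ 4 + V a \<omega> ^ 4 + (U b \<omega> ^ 4 + V b \<omega> ^ 4))"
      using U_4 V_4 that by auto
    show "(\<lambda>\<omega>. W a \<omega> * W b \<omega>) \<in> borel_measurable M" using W_meas that by measurable
    show "AE \<omega> in M. norm (W a \<omega> * W b \<omega>) \<le> norm (U a \<omega> ^ 4 + V a \<omega> ^ 4 + (U b \<omega> ^ 4 + V b \<omega> ^ 4))"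
    proof (intro AE_I2)
      fix \<omega>
      have "0 \<le> U a \<omega> ^ 4 + V a \<omega> ^ 4 + (U b \<omega> ^ 4 + V b \<omega> ^ 4)" by simp
      then show "norm (W a \<omega> * W b \<omega>) \<le> norm (U a \<omega> ^ 4 + V a \<omega> ^ 4 + (U b \<omega> ^ 4 + V b \<omega> ^ 4))"
        using bound4[of "U a \<omega>" "V a \<omega>" "U b \<omega>" "V b \<omega>"] by (simp add: W_def)
    qed
  qed
  have W_int: "integrable M (W a)" if "a < n" for a
  proof (rule Bochner_Integration.integrable_bound)
    show "integrable M (\<lambda>\<omega>. 1 + W a \<omega> * W a \<omega>)" using WW_int that by auto
    show "W a \<in> borel_measurable M" using W_meas that .
    show "AE \<omega> in M. norm (W a \<omega>) \<le> norm (1 + W a \<omega> * W a \<omega>)"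
    proof (intro AE_I2)
      fix \<omega>
      have "\<bar>W a \<omega>\<bar> \<le> 1 + W a \<omega> * W a \<omega>"
        by (rule abs_le_one_plus_sq)
      moreover have "0 \<le> 1 + W a \<omega> * W a \<omega>" by (simp add: add_nonneg_nonneg)
      ultimately show "norm (W a \<omega>) \<le> norm (1 + W a \<omega> * W a \<omega>)" by simp
    qed
  qed
  have n0: "0 < n" using n by simp
  have m0: "0 < m" using m by simp
  define mu where "mu = integral\<^sup>L M (W 0)"
  define s2 where "s2 = integral\<^sup>L M (\<lambda>\<omega>. W 0 \<omega> * W 0 \<omega>) - mu * mu"
  define r where "r = (\<lambda>(i::nat) (j::nat). mu * mu + (if i = j then s2 else 0))"
  define q where "q = (\<lambda>(s::nat) (t::nat) (i::nat) (j::nat). if s = t then (if i = j then p i else 0) else p i * p j)"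
  have W_app: "W i \<omega> = U i \<omega> * V i \<omega>" for i \<omega> by (simp add: W_def)
  have I_app: "I t i \<omega> = (if k t \<omega> = i then 1 else 0)" for t i \<omega> by (simp add: I_def)
  have Xv_app: "Xv \<omega> a = (U a \<omega>, V a \<omega>)" if "a < n" for a \<omega> using that by (simp add: Xv_def)
  have Kv_app: "Kv \<omega> t = k t \<omega>" if "t < m" for t \<omega> using that by (simp add: Kv_def)
  have E_I: "integral\<^sup>L M (I t i) = p i" if "t < m" "i < n" for t i
  proof -
    have "integral\<^sup>L M (I t i) = integral\<^sup>L M (indicator {\<omega> \<in> space M. k t \<omega> = i})"
      by (rule Bochner_Integration.integral_cong) (auto simp: I_def indicator_def)
    also have "\<dots> = measure M {\<omega> \<in> space M. k t \<omega> = i}"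
    proof -
      have "{\<omega> \<in> space M. k t \<omega> = i} \<inter> space M = {\<omega> \<in> space M. k t \<omega> = i}" by blast
      then show ?thesis by simp
    qed
    finally show ?thesis using k_dist that by simp
  qed
  have E_II: "integral\<^sup>L M (\<lambda>\<omega>. I s i \<omega> * I t j \<omega>) = q s t i j" if "s < m" "t < m" "i < n" "j < n" for s t i j
  proof (cases "s = t")
    case True
    have "(\<lambda>\<omega>. I s i \<omega> * I t j \<omega>) = (\<lambda>\<omega>. if i = j then I t i \<omega> else 0)"
      using True by (auto simp: I_def)
    then show ?thesis using True E_I that by (simp add: q_def)
  next
    case False
    have ind0: "indep_vars (\<lambda>_. borel) (\<lambda>u \<omega>. (\<lambda>x. if x = (if u = s then i else j) then 1 else (0::real)) (k u \<omega>)) {s,t}"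
      by (rule indep_vars_compose2[OF indep_vars_subset[OF k_indep]]) (use that in auto)
    then have ind: "indep_vars (\<lambda>_. borel) (\<lambda>u. I u (if u = s then i else j)) {s,t}"
      by (simp add: I_def)
    have "(\<integral>\<omega>. (\<Prod>u\<in>{s,t}. I u (if u = s then i else j) \<omega>) \<partial>M) = (\<Prod>u\<in>{s,t}. integral\<^sup>L M (I u (if u = s then i else j)))"
      by (rule indep_vars_lebesgue_integral[OF _ ind]) (use that I_int in auto)
    then show ?thesis using False that E_I by (simp add: q_def)
  qed
  have E_h: "(\<integral>\<omega>. h (U a \<omega>, V a \<omega>) \<partial>M) = (\<integral>\<omega>. h (U 0 \<omega>, V 0 \<omega>) \<partial>M)"
    if "a < n" and h: "h \<in> borel_measurable (borel \<Otimes>\<^sub>M borel)" for a and h :: "real \<times> real \<Rightarrow> real"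
  proof -
    have pa: "(\<lambda>\<omega>. (U a \<omega>, V a \<omega>)) \<in> measurable M (borel \<Otimes>\<^sub>M borel)"
      using U_rv[OF that(1)] V_rv[OF that(1)] by measurable
    have p0: "(\<lambda>\<omega>. (U 0 \<omega>, V 0 \<omega>)) \<in> measurable M (borel \<Otimes>\<^sub>M borel)"
      using U_rv[OF n0] V_rv[OF n0] by measurable
    have "(\<integral>\<omega>. h (U a \<omega>, V a \<omega>) \<partial>M) = integral\<^sup>L (distr M (borel \<Otimes>\<^sub>M borel) (\<lambda>\<omega>. (U a \<omega>, V a \<omega>))) h"
      by (simp add: integral_distr[OF pa h])
    also have "\<dots> = integral\<^sup>L (distr M (borel \<Otimes>\<^sub>M borel) (\<lambda>\<omega>. (U 0 \<omega>, V 0 \<omega>))) h"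
      using UV_ident[OF that(1)] by simp
    also have "\<dots> = (\<integral>\<omega>. h (U 0 \<omega>, V 0 \<omega>) \<partial>M)"
      by (simp add: integral_distr[OF p0 h])
    finally show ?thesis .
  qed
  have E_W: "integral\<^sup>L M (W a) = mu" if "a < n" for a
    using E_h[OF that, of "\<lambda>z. fst z * snd z"] by (simp add: mu_def W_def)
  have E_WW1: "integral\<^sup>L M (\<lambda>\<omega>. W a \<omega> * W a \<omega>) = mu * mu + s2" if "a < n" for a
    using E_h[OF that, of "\<lambda>z. (fst z * snd z) * (fst z * snd z)"] by (simp add: s2_def W_def)
  have E_WW2: "integral\<^sup>L M (\<lambda>\<omega>. W a \<omega> * W b \<omega>) = mu * mu" if "a < n" "b < n" "a \<noteq> b" for a b
  proof -
    have "indep_vars (\<lambda>_. borel) (\<lambda>i \<omega>. (\<lambda>z. fst z * snd z) (U i \<omega>, V i \<omega>)) {a,b}"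
      by (rule indep_vars_compose2[OF indep_vars_subset[OF UV_indep]]) (use that in auto)
    then have ind: "indep_vars (\<lambda>_. borel) W {a,b}" by (simp add: W_def)
    have "(\<integral>\<omega>. (\<Prod>u\<in>{a,b}. W u \<omega>) \<partial>M) = (\<Prod>u\<in>{a,b}. integral\<^sup>L M (W u))"
      by (rule indep_vars_lebesgue_integral[OF _ ind]) (use that W_int in auto)
    then show ?thesis using that E_W by simp
  qed
  have E_WW: "integral\<^sup>L M (\<lambda>\<omega>. W a \<omega> * W b \<omega>) = r a b" if "a < n" "b < n" for a b
    using E_WW1 E_WW2 that by (cases "a = b") (auto simp: r_def)
  have comp_a: "(\<lambda>x. x a) \<in> measurable XS (borel \<Otimes>\<^sub>M borel)" if "a < n" for a
    unfolding XS_def by (rule measurable_component_singleton) (use that in simp)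
  have FM: "(\<lambda>x. fst (x a) * snd (x a)) \<in> borel_measurable XS" if "a < n" for a
    by (intro borel_measurable_times measurable_compose[OF comp_a[OF that] measurable_fst]
        measurable_compose[OF comp_a[OF that] measurable_snd])
  have comp_t: "(\<lambda>y. y t) \<in> measurable KS (count_space UNIV)" if "t < m" for t
    unfolding KS_def by (rule measurable_component_singleton) (use that in simp)
  have GM: "(\<lambda>y. if y t = i then 1 else (0::real)) \<in> borel_measurable KS" if "t < m" for t i
    by (rule measurable_compose[OF comp_t[OF that]]) simp
  have C2: "integrable M (\<lambda>\<omega>. W a \<omega> * W b \<omega> * (I s i \<omega> * I t j \<omega>)) \<and>
      integral\<^sup>L M (\<lambda>\<omega>. W a \<omega> * W b \<omega> * (I s i \<omega> * I t j \<omega>)) = r a b * q s t i j"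
    if "a < n" "b < n" "s < m" "t < m" "i < n" "j < n" for a b s t i j
  proof -
    have fm: "(\<lambda>x. fst (x a) * snd (x a) * (fst (x b) * snd (x b))) \<in> borel_measurable XS"
      by (rule borel_measurable_times[OF FM[OF that(1)] FM[OF that(2)]])
    have gm: "(\<lambda>y. (if y s = i then 1 else (0::real)) * (if y t = j then 1 else 0)) \<in> borel_measurable KS"
      by (rule borel_measurable_times[OF GM[OF that(3)] GM[OF that(4)]])
    have ef: "(\<lambda>\<omega>. (\<lambda>x. fst (x a) * snd (x a) * (fst (x b) * snd (x b))) (Xv \<omega>)) = (\<lambda>\<omega>. W a \<omega> * W b \<omega>)"
      using that by (simp add: Xv_app W_app)
    have eg: "(\<lambda>\<omega>. (\<lambda>y. (if y s = i then 1 else (0::real)) * (if y t = j then 1 else 0)) (Kv \<omega>)) = (\<lambda>\<omega>. I s i \<omega> * I t j \<omega>)"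
      using that by (simp add: Kv_app I_app)
    have "integrable M (\<lambda>\<omega>. W a \<omega> * W b \<omega>)" using WW_int that by simp
    moreover have "integrable M (\<lambda>\<omega>. I s i \<omega> * I t j \<omega>)"
      by (rule integrable_const_bound[where B=1]) (use that I_meas in \<open>auto simp: I_def\<close>)
    ultimately have "integrable M (\<lambda>\<omega>. (\<lambda>x. fst (x a) * snd (x a) * (fst (x b) * snd (x b))) (Xv \<omega>) * (\<lambda>y. (if y s = i then 1 else (0::real)) * (if y t = j then 1 else 0)) (Kv \<omega>)) \<and>
      (\<integral>\<omega>. (\<lambda>x. fst (x a) * snd (x a) * (fst (x b) * snd (x b))) (Xv \<omega>) * (\<lambda>y. (if y s = i then 1 else (0::real)) * (if y t = j then 1 else 0)) (Kv \<omega>) \<partial>M)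
      = (\<integral>\<omega>. (\<lambda>x. fst (x a) * snd (x a) * (fst (x b) * snd (x b))) (Xv \<omega>) \<partial>M) * (\<integral>\<omega>. (\<lambda>y. (if y s = i then 1 else (0::real)) * (if y t = j then 1 else 0)) (Kv \<omega>) \<partial>M)"
      by (intro G[OF fm gm]) (simp_all only: ef eg)
    then have "integrable M (\<lambda>\<omega>. W a \<omega> * W b \<omega> * (I s i \<omega> * I t j \<omega>)) \<and>
      integral\<^sup>L M (\<lambda>\<omega>. W a \<omega> * W b \<omega> * (I s i \<omega> * I t j \<omega>)) = 
      integral\<^sup>L M (\<lambda>\<omega>. W a \<omega> * W b \<omega>) * integral\<^sup>L M (\<lambda>\<omega>. I s i \<omega> * I t j \<omega>)"
      by (simp only: Xv_app[OF that(1)] Xv_app[OF that(2)] Kv_app[OF that(3)] Kv_app[OF that(4)]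
          fst_conv snd_conv W_app[symmetric] I_app[symmetric])
    then show ?thesis using E_WW E_II that by simp
  qed
  have C0: "integrable M (\<lambda>\<omega>. W a \<omega> * I t i \<omega>) \<and>
      integral\<^sup>L M (\<lambda>\<omega>. W a \<omega> * I t i \<omega>) = mu * p i"
    if "a < n" "t < m" "i < n" for a t i
  proof -
    have "integrable M (\<lambda>\<omega>. (\<lambda>x. fst (x a) * snd (x a)) (Xv \<omega>) * (\<lambda>y. if y t = i then 1 else (0::real)) (Kv \<omega>)) \<and>
      (\<integral>\<omega>. (\<lambda>x. fst (x a) * snd (x a)) (Xv \<omega>) * (\<lambda>y. if y t = i then 1 else (0::real)) (Kv \<omega>) \<partial>M)
      = (\<integral>\<omega>. (\<lambda>x. fst (x a) * snd (x a)) (Xv \<omega>) \<partial>M) * (\<integral>\<omega>. (\<lambda>y. if y t = i then 1 else (0::real)) (Kv \<omega>) \<partial>M)"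
    proof (rule G[OF FM[OF that(1)] GM[OF that(2)]])
      show "integrable M (\<lambda>\<omega>. (\<lambda>x. fst (x a) * snd (x a)) (Xv \<omega>))"
        using W_int[OF that(1)] by (simp add: Xv_app[OF that(1)] W_def)
      show "integrable M (\<lambda>\<omega>. (\<lambda>y. if y t = i then 1 else (0::real)) (Kv \<omega>))"
        using I_int[OF that(2)] by (simp add: Kv_app[OF that(2)] I_def)
    qed
    then have "integrable M (\<lambda>\<omega>. W a \<omega> * I t i \<omega>) \<and>
      integral\<^sup>L M (\<lambda>\<omega>. W a \<omega> * I t i \<omega>) = integral\<^sup>L M (W a) * integral\<^sup>L M (I t i)"
      by (simp only: Xv_app[OF that(1)] Kv_app[OF that(2)]
          fst_conv snd_conv W_app[symmetric] I_app[symmetric] eta_contract_eq)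
    then show ?thesis using E_W E_I that by simp
  qed
  have C1: "integrable M (\<lambda>\<omega>. W a \<omega> * W b \<omega> * I t i \<omega>) \<and>
      integral\<^sup>L M (\<lambda>\<omega>. W a \<omega> * W b \<omega> * I t i \<omega>) = r a b * p i"
    if "a < n" "b < n" "t < m" "i < n" for a b t i
  proof -
    have "(\<lambda>\<omega>. W a \<omega> * W b \<omega> * I t i \<omega>) = (\<lambda>\<omega>. W a \<omega> * W b \<omega> * (I t i \<omega> * I t i \<omega>))"
      by (auto simp: I_def)
    then show ?thesis using C2[of a b t t i i] that by (simp add: q_def)
  qed
  have C0i: "integrable M (\<lambda>\<omega>. W a \<omega> * I t i \<omega>)" if "a < n" "t < m" "i < n" for a t i
    using C0[OF that] by blast
  have C0e: "integral\<^sup>L M (\<lambda>\<omega>. W a \<omega> * I t i \<omega>) = mu * p i" if "a < n" "t < m" "i < n" for a t i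
    using C0[OF that] by blast
  have C1i: "integrable M (\<lambda>\<omega>. W a \<omega> * W b \<omega> * I t i \<omega>)" if "a < n" "b < n" "t < m" "i < n" for a b t i
    using C1[OF that] by blast
  have C1e: "integral\<^sup>L M (\<lambda>\<omega>. W a \<omega> * W b \<omega> * I t i \<omega>) = r a b * p i" if "a < n" "b < n" "t < m" "i < n" for a b t i
    using C1[OF that] by blast
  have C2i: "integrable M (\<lambda>\<omega>. W a \<omega> * W b \<omega> * (I s i \<omega> * I t j \<omega>))"
    if "a < n" "b < n" "s < m" "t < m" "i < n" "j < n" for a b s t i j
    using C2[OF that] by blast
  have C2e: "integral\<^sup>L M (\<lambda>\<omega>. W a \<omega> * W b \<omega> * (I s i \<omega> * I t j \<omega>)) = r a b * q s t i j"
    if "a < n" "b < n" "s < m" "t < m" "i < n" "j < n" for a b s t i j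
    using C2[OF that] by blast
  define A where "A = (\<lambda>\<omega>. \<Sum>t<m. \<Sum>i<n. W i \<omega> * I t i \<omega>)"
  define B where "B = (\<lambda>\<omega>. \<Sum>i<n. W i \<omega>)"
  have Teq: "T = (\<lambda>\<omega>. A \<omega> / real m - B \<omega> / real n)"
  proof
    fix \<omega>
    have row: "(\<Sum>i<n. sampling_matrix n m (\<lambda>t. k t \<omega>) t i * x i) = sqrt (real n / real m) * (if k t \<omega> < n then x (k t \<omega>) else 0)"
      for x t
    proof -
      have "(\<Sum>i<n. sampling_matrix n m (\<lambda>t. k t \<omega>) t i * x i) = sqrt (real n / real m) * (\<Sum>i<n. (if k t \<omega> = i then 1 else 0) * x i)"
        by (simp add: sampling_matrix_def sum_distrib_left mult.assoc)
      then show ?thesis by (simp only: sum_ind)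
    qed
    have rowW: "(\<Sum>i<n. W i \<omega> * I t i \<omega>) = (if k t \<omega> < n then W (k t \<omega>) \<omega> else 0)" for t
      using sum_ind[where k="k t \<omega>" and x="\<lambda>i. W i \<omega>" and n=n] by (simp add: I_def mult.commute)
    have sq: "sqrt (real n / real m) * sqrt (real n / real m) = real n / real m" by simp
    have "sketched_inner n m (sampling_matrix n m (\<lambda>t. k t \<omega>)) (\<lambda>i. U i \<omega>) (\<lambda>i. V i \<omega>)
        = (\<Sum>t<m. real n / real m * (\<Sum>i<n. W i \<omega> * I t i \<omega>))"
      unfolding sketched_inner_def row rowW
    proof (rule sum.cong[OF refl])
      fix t
      show "sqrt (real n / real m) * (if k t \<omega> < n then U (k t \<omega>) \<omega> else 0) *
          (sqrt (real n / real m) * (if k t \<omega> < n then V (k t \<omega>) \<omega> else 0)) =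
          real n / real m * (if k t \<omega> < n then W (k t \<omega>) \<omega> else 0)"
        using sq by (auto simp: W_def algebra_simps)
    qed
    also have "\<dots> = real n / real m * A \<omega>" by (simp add: A_def sum_distrib_left)
    finally have si: "sketched_inner n m (sampling_matrix n m (\<lambda>t. k t \<omega>)) (\<lambda>i. U i \<omega>) (\<lambda>i. V i \<omega>) = real n / real m * A \<omega>" .
    show "T \<omega> = A \<omega> / real m - B \<omega> / real n"
      unfolding T_def si using n0 m0 by (simp add: B_def W_def field_simps)
  qed
  have A_int: "integrable M A" unfolding A_def
    by (intro Bochner_Integration.integrable_sum C0i) auto
  have B_int: "integrable M B" unfolding B_def by (intro Bochner_Integration.integrable_sum W_int) auto
  have T_int: "integrable M T" unfolding Teq using A_int B_int by auto
  have E_A: "integral\<^sup>L M A = real m * mu"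
  proof -
    have "integral\<^sup>L M A = (\<Sum>t<m. integral\<^sup>L M (\<lambda>\<omega>. \<Sum>i<n. W i \<omega> * I t i \<omega>))" unfolding A_def
      by (intro Bochner_Integration.integral_sum Bochner_Integration.integrable_sum C0i) auto
    also have "\<dots> = (\<Sum>t<m. \<Sum>i<n. integral\<^sup>L M (\<lambda>\<omega>. W i \<omega> * I t i \<omega>))"
      by (intro sum.cong refl Bochner_Integration.integral_sum C0i) auto
    also have "\<dots> = (\<Sum>t<m. \<Sum>i<n. mu * p i)"
      by (intro sum.cong refl C0e) auto
    also have "\<dots> = real m * mu" using p_sum by (simp add: sum_distrib_left[symmetric])
    finally show ?thesis .
  qed
  have E_B: "integral\<^sup>L M B = real n * mu"
  proof -
    have "integral\<^sup>L M B = (\<Sum>i<n. integral\<^sup>L M (W i))" unfolding B_def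
      by (intro Bochner_Integration.integral_sum W_int) auto
    also have "\<dots> = (\<Sum>i<n. mu)" by (intro sum.cong refl E_W) auto
    finally show ?thesis by simp
  qed
  have E_T: "integral\<^sup>L M T = 0" unfolding Teq using A_int B_int E_A E_B n0 m0 by simp
  have AA: "A \<omega> * A \<omega> = (\<Sum>s<m. \<Sum>i<n. \<Sum>t<m. \<Sum>j<n. W i \<omega> * W j \<omega> * (I s i \<omega> * I t j \<omega>))" for \<omega>
    unfolding A_def sum_distrib_right unfolding sum_distrib_left by (simp add: mult_ac)
  have AB: "A \<omega> * B \<omega> = (\<Sum>t<m. \<Sum>i<n. \<Sum>j<n. W i \<omega> * W j \<omega> * I t i \<omega>)" for \<omega>
    unfolding A_def B_def sum_distrib_right unfolding sum_distrib_left by (simp add: mult_ac)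
  have BB: "B \<omega> * B \<omega> = (\<Sum>i<n. \<Sum>j<n. W i \<omega> * W j \<omega>)" for \<omega>
    unfolding B_def sum_distrib_right unfolding sum_distrib_left by (simp add: mult_ac)
  have inner2: "integrable M (\<lambda>\<omega>. \<Sum>t<m. \<Sum>j<n. W i \<omega> * W j \<omega> * (I s i \<omega> * I t j \<omega>)) \<and>
      integral\<^sup>L M (\<lambda>\<omega>. \<Sum>t<m. \<Sum>j<n. W i \<omega> * W j \<omega> * (I s i \<omega> * I t j \<omega>))
       = (\<Sum>t<m. \<Sum>j<n. r i j * q s t i j)" if "s < m" "i < n" for s i
  proof -
    have "integrable M (\<lambda>\<omega>. \<Sum>t<m. \<Sum>j<n. W i \<omega> * W j \<omega> * (I s i \<omega> * I t j \<omega>)) \<and>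
      integral\<^sup>L M (\<lambda>\<omega>. \<Sum>t<m. \<Sum>j<n. W i \<omega> * W j \<omega> * (I s i \<omega> * I t j \<omega>))
       = (\<Sum>t<m. \<Sum>j<n. integral\<^sup>L M (\<lambda>\<omega>. W i \<omega> * W j \<omega> * (I s i \<omega> * I t j \<omega>)))"
      by (rule int_sum2) (use that in \<open>auto intro: C2i\<close>)
    moreover have "(\<Sum>t<m. \<Sum>j<n. integral\<^sup>L M (\<lambda>\<omega>. W i \<omega> * W j \<omega> * (I s i \<omega> * I t j \<omega>))) = (\<Sum>t<m. \<Sum>j<n. r i j * q s t i j)"
      by (intro sum.cong refl C2e) (use that in auto)
    ultimately show ?thesis by simp
  qed
  have AAi: "integrable M (\<lambda>\<omega>. A \<omega> * A \<omega>) \<and> integral\<^sup>L M (\<lambda>\<omega>. A \<omega> * A \<omega>) = (\<Sum>s<m. \<Sum>i<n. \<Sum>t<m. \<Sum>j<n. r i j * q s t i j)"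
  proof -
    have "integrable M (\<lambda>\<omega>. \<Sum>s<m. \<Sum>i<n. (\<lambda>\<omega>. \<Sum>t<m. \<Sum>j<n. W i \<omega> * W j \<omega> * (I s i \<omega> * I t j \<omega>)) \<omega>) \<and>
      integral\<^sup>L M (\<lambda>\<omega>. \<Sum>s<m. \<Sum>i<n. (\<lambda>\<omega>. \<Sum>t<m. \<Sum>j<n. W i \<omega> * W j \<omega> * (I s i \<omega> * I t j \<omega>)) \<omega>)
       = (\<Sum>s<m. \<Sum>i<n. integral\<^sup>L M (\<lambda>\<omega>. \<Sum>t<m. \<Sum>j<n. W i \<omega> * W j \<omega> * (I s i \<omega> * I t j \<omega>)))"
      by (rule int_sum2) (use inner2 in auto)
    moreover have "(\<Sum>s<m. \<Sum>i<n. integral\<^sup>L M (\<lambda>\<omega>. \<Sum>t<m. \<Sum>j<n. W i \<omega> * W j \<omega> * (I s i \<omega> * I t j \<omega>)))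
       = (\<Sum>s<m. \<Sum>i<n. \<Sum>t<m. \<Sum>j<n. r i j * q s t i j)"
      by (intro sum.cong refl) (use inner2 in auto)
    ultimately show ?thesis by (simp only: AA)
  qed
  have inner1: "integrable M (\<lambda>\<omega>. \<Sum>j<n. W i \<omega> * W j \<omega> * I t i \<omega>) \<and>
      integral\<^sup>L M (\<lambda>\<omega>. \<Sum>j<n. W i \<omega> * W j \<omega> * I t i \<omega>) = (\<Sum>j<n. r i j * p i)" if "t < m" "i < n" for t i
  proof -
    have "integral\<^sup>L M (\<lambda>\<omega>. \<Sum>j<n. W i \<omega> * W j \<omega> * I t i \<omega>) = (\<Sum>j<n. integral\<^sup>L M (\<lambda>\<omega>. W i \<omega> * W j \<omega> * I t i \<omega>))"
      by (intro Bochner_Integration.integral_sum C1i) (use that in auto)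
    also have "\<dots> = (\<Sum>j<n. r i j * p i)" by (intro sum.cong refl C1e) (use that in auto)
    finally show ?thesis using that by (auto intro!: Bochner_Integration.integrable_sum C1i)
  qed
  have ABi: "integrable M (\<lambda>\<omega>. A \<omega> * B \<omega>) \<and> integral\<^sup>L M (\<lambda>\<omega>. A \<omega> * B \<omega>) = (\<Sum>t<m. \<Sum>i<n. \<Sum>j<n. r i j * p i)"
  proof -
    have "integrable M (\<lambda>\<omega>. \<Sum>t<m. \<Sum>i<n. (\<lambda>\<omega>. \<Sum>j<n. W i \<omega> * W j \<omega> * I t i \<omega>) \<omega>) \<and>
      integral\<^sup>L M (\<lambda>\<omega>. \<Sum>t<m. \<Sum>i<n. (\<lambda>\<omega>. \<Sum>j<n. W i \<omega> * W j \<omega> * I t i \<omega>) \<omega>)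
       = (\<Sum>t<m. \<Sum>i<n. integral\<^sup>L M (\<lambda>\<omega>. \<Sum>j<n. W i \<omega> * W j \<omega> * I t i \<omega>))"
      by (rule int_sum2) (use inner1 in auto)
    moreover have "(\<Sum>t<m. \<Sum>i<n. integral\<^sup>L M (\<lambda>\<omega>. \<Sum>j<n. W i \<omega> * W j \<omega> * I t i \<omega>))
       = (\<Sum>t<m. \<Sum>i<n. \<Sum>j<n. r i j * p i)"
      by (intro sum.cong refl) (use inner1 in auto)
    ultimately show ?thesis by (simp only: AB)
  qed
  have BBi: "integrable M (\<lambda>\<omega>. B \<omega> * B \<omega>) \<and> integral\<^sup>L M (\<lambda>\<omega>. B \<omega> * B \<omega>) = (\<Sum>i<n. \<Sum>j<n. r i j)"
  proof -
    have "integrable M (\<lambda>\<omega>. \<Sum>i<n. \<Sum>j<n. W i \<omega> * W j \<omega>) \<and>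
      integral\<^sup>L M (\<lambda>\<omega>. \<Sum>i<n. \<Sum>j<n. W i \<omega> * W j \<omega>) = (\<Sum>i<n. \<Sum>j<n. integral\<^sup>L M (\<lambda>\<omega>. W i \<omega> * W j \<omega>))"
      by (rule int_sum2) (auto intro: WW_int)
    moreover have "(\<Sum>i<n. \<Sum>j<n. integral\<^sup>L M (\<lambda>\<omega>. W i \<omega> * W j \<omega>)) = (\<Sum>i<n. \<Sum>j<n. r i j)"
      by (intro sum.cong refl E_WW) auto
    ultimately show ?thesis by (simp only: BB)
  qed
  have T2eq: "(\<lambda>\<omega>. T \<omega> ^ 2) = (\<lambda>\<omega>. A \<omega> * A \<omega> / (real m * real m) - 2 * (A \<omega> * B \<omega>) / (real m * real n) + B \<omega> * B \<omega> / (real n * real n))"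
    unfolding Teq by (rule ext) (rule sq_expand)
  have T2_int: "integrable M (\<lambda>\<omega>. T \<omega> ^ 2)"
    unfolding T2eq using AAi ABi BBi by auto
  have E_T2: "integral\<^sup>L M (\<lambda>\<omega>. T \<omega> ^ 2) =
     (real m * (mu * mu + s2) + (real m * real m - real m) * (mu * mu + s2 * (\<Sum>i<n. p i ^ 2)))  / (real m * real m)
     - 2 * (real m * (real n * (mu * mu) + s2)) / (real m * real n)
     + (real n * real n * (mu * mu) + real n * s2) / (real n * real n)" (is "_ = ?R")
  proof -
    have "integral\<^sup>L M (\<lambda>\<omega>. T \<omega> ^ 2) = integral\<^sup>L M (\<lambda>\<omega>. A \<omega> * A \<omega>) / (real m * real m)
      - 2 * integral\<^sup>L M (\<lambda>\<omega>. A \<omega> * B \<omega>) / (real m * real n) + integral\<^sup>L M (\<lambda>\<omega>. B \<omega> * B \<omega>) / (real n * real n)"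
      unfolding T2eq using AAi ABi BBi by simp
    also have "\<dots> = ?R"
      using AAi ABi BBi unfolding r_def q_def
      by (simp only: sumA[OF p_sum] sumB[OF p_sum] sumC)
    finally show ?thesis .
  qed
  have var_W: "(\<integral>\<omega>. (U 0 \<omega> * V 0 \<omega> - (\<integral>\<omega>'. U 0 \<omega>' * V 0 \<omega>' \<partial>M)) ^ 2 \<partial>M) = s2"
  proof -
    have "(\<integral>\<omega>. (U 0 \<omega> * V 0 \<omega> - (\<integral>\<omega>'. U 0 \<omega>' * V 0 \<omega>' \<partial>M)) ^ 2 \<partial>M)
      = (\<integral>\<omega>. (W 0 \<omega> * W 0 \<omega> - 2 * mu * W 0 \<omega> + mu * mu) \<partial>M)"
      by (rule Bochner_Integration.integral_cong) (auto simp: W_def mu_def power2_eq_square algebra_simps)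
    also have "\<dots> = s2" using WW_int[OF n0 n0] W_int[OF n0] by (simp add: s2_def mu_def prob_space)
    finally show ?thesis .
  qed
  show ?thesis
    using T_int T2_int E_T E_T2 var_W final_alg[OF _ _, of "real m" "real n" "mu * mu" s2 "\<Sum>i<n. p i ^ 2"] n0 m0
    by simp
qed
end
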